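(* Let $S$ be a nonempty subset of $\mathbb{R}^m$. Then $\operatorname{Face}_{\mathcal{A}_{\bm o}}\big(\operatorname{Sign}_{\mathcal{A}_{\bm o}}(S)\big)=S$ if and only if $S$ is an open face of $\delta\mathcal{A}_{\bm o}$.
   Context: Fix nonzero $\bm u_1,\dots,\bm u_m\in\mathbb{R}^n$ (repetitions and parallel vectors allowed). For $\bm a\in\mathbb{R}^m$, $\mathcal{A}_{\bm a}$ is the arrangement of hyperplanes $\langle\bm u_i,\bm x\rangle=a_i$, $i=1,\dots,m$; the sign vector of $\bm x$ is $(\operatorname{sign}(\langle\bm u_i,\bm x\rangle-a_i))_{i=1}^m$, and $\operatorname{sign}(\mathcal{A}_{\bm a})\subseteq\{+,0,-\}^m$ is the set of all such sign vectors. Sign operator: for $S\subseteq\mathbb{R}^m$, $\operatorname{Sign}_{\mathcal{A}_{\bm o}}(S)=\bigcup_{\bm a\in S}\operatorname{sign}(\mathcal{A}_{\bm a})$. Face operator: for $\bm s\in\{+,0,-\}^m$, $\operatorname{Face}_{\mathcal{A}_{\bm o}}(\bm s)=\{\bm a\in\mathbb{R}^m:\bm s\in\operatorname{sign}(\mathcal{A}_{\bm a})\}$, and for $T\subseteq\{+,0,-\}^m$, $\operatorname{Face}_{\mathcal{A}_{\bm o}}(T)=\bigcap_{\bm s\in T}\operatorname{Face}_{\mathcal{A}_{\bm o}}(\bm s)$. A circuit is $C\subseteq[m]$ with $\{\bm u_i:i\in C\}$ a minimal linearly dependent indexed family; $\bm c^C$ satisfies $\sum c_i\bm u_i=\bm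 0$, $c_i\ne0\iff i\in C$. The derived arrangement $\delta\mathcal{A}_{\bm o}$ consists of hyperplanes $\langle\bm c^C,\bm y\rangle=0$ in $\mathbb{R}^m$; its open faces are the nonempty sets $\{\bm y:\operatorname{sign}\langle\bm c^C,\bm y\rangle=\epsilon_C\text{ for all circuits }C\}$ for fixed $\epsilon_C\in\{+,0,-\}$. *)

theory Defs
  imports "HOL-Analysis.Analysis"
begin

text \<open>Hyperplanes are indexed by a finite type 'm (so m = CARD('m)); the normal vectors are
  u :: 'm => real^'n.  Signs +,0,- are encoded as the reals 1,0,-1 (via sgn).\<close>

definition sign_vec :: "('m \<Rightarrow> real^'n) \<Rightarrow> real^'m \<Rightarrow> real^'n \<Rightarrow> ('m \<Rightarrow> real)" where
  "sign_vec u a x = (\<lambda>i. sgn (inner (u i) x - a $ i))"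

definition sign_arr :: "('m \<Rightarrow> real^'n) \<Rightarrow> real^'m \<Rightarrow> ('m \<Rightarrow> real) set" where
  "sign_arr u a = range (sign_vec u a)"

definition Sign_op :: "('m \<Rightarrow> real^'n) \<Rightarrow> (real^'m) set \<Rightarrow> ('m \<Rightarrow> real) set" where
  "Sign_op u S = (\<Union>a\<in>S. sign_arr u a)"

definition Face_vec :: "('m \<Rightarrow> real^'n) \<Rightarrow> ('m \<Rightarrow> real) \<Rightarrow> (real^'m) set" where
  "Face_vec u s = {a. s \<in> sign_arr u a}"

definition Face_op :: "('m \<Rightarrow> real^'n) \<Rightarrow> ('m \<Rightarrow> real) set \<Rightarrow> (real^'m) set" where
  "Face_op u T = (\<Inter>s\<in>T. Face_vec u s)"

text \<open>Linear dependence of the indexed family (u i)_{i in C} (repetitions count).\<close>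
definition dep_family :: "('m \<Rightarrow> real^'n) \<Rightarrow> 'm set \<Rightarrow> bool" where
  "dep_family u C = (\<exists>c. (\<Sum>i\<in>C. c i *\<^sub>R u i) = 0 \<and> (\<exists>i\<in>C. c i \<noteq> 0))"

definition circuit :: "('m \<Rightarrow> real^'n) \<Rightarrow> 'm set \<Rightarrow> bool" where
  "circuit u C = (dep_family u C \<and> (\<forall>D. D \<subset> C \<longrightarrow> \<not> dep_family u D))"

definition circuit_vec :: "('m::finite \<Rightarrow> real^'n) \<Rightarrow> 'm set \<Rightarrow> real^'m" where
  "circuit_vec u C = (SOME c. (\<Sum>i\<in>UNIV. c $ i *\<^sub>R u i) = 0 \<and> (\<forall>i. c $ i \<noteq> 0 \<longleftrightarrow> i \<in> C))"

definition derived_open_face :: "('m::finite \<Rightarrow> real^'n) \<Rightarrow> (real^'m) set \<Rightarrow> bool" where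
  "derived_open_face u F = (F \<noteq> {} \<and>
     (\<exists>\<epsilon> :: 'm set \<Rightarrow> real. (\<forall>C. \<epsilon> C \<in> {-1, 0, 1}) \<and>
        F = {y. \<forall>C. circuit u C \<longrightarrow> sgn (inner (circuit_vec u C) y) = \<epsilon> C}))"

end

theory Submission imports Defs begin


definition Osgn :: "'m set \<Rightarrow> ('m \<Rightarrow> real) \<Rightarrow> (real^'m) set" where
  "Osgn I s = {t. \<forall>i\<in>I. sgn (t$i) = s i}"

definition Comp :: "'m set \<Rightarrow> real^'m \<Rightarrow> ('m \<Rightarrow> real) \<Rightarrow> real \<Rightarrow> bool" where
  "Comp I r s v = (\<exists>t\<in>Osgn I s. inner r t = v)"

definition posw :: "'m set \<Rightarrow> real^'m \<Rightarrow> ('m \<Rightarrow> real) \<Rightarrow> bool" where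
  "posw I r s = (\<exists>i. r$i \<noteq> 0 \<and> (i \<notin> I \<or> r$i * s i > 0))"

lemma sgn_add_same: "sgn (a::real) = sgn b \<Longrightarrow> sgn (a + b) = sgn a"
  by (auto simp: sgn_real_def split: if_splits)

lemma Osgn_add: "t1 \<in> Osgn I s \<Longrightarrow> t2 \<in> Osgn I s \<Longrightarrow> t1 + t2 \<in> Osgn I s"
  unfolding Osgn_def by (auto simp: sgn_add_same)

lemma Osgn_scale: "t \<in> Osgn I s \<Longrightarrow> c > 0 \<Longrightarrow> c *\<^sub>R t \<in> Osgn I s"
  unfolding Osgn_def by (auto simp: sgn_mult)

lemma Comp_scale: "Comp I r s v \<Longrightarrow> Comp I (c *\<^sub>R r) s (c * v)"
  unfolding Comp_def by auto

lemma Comp_sgn: assumes "Comp I r s v" "sgn v = sgn w" shows "Comp I r s w"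
proof (cases "v = 0")
  case True then show ?thesis using assms by (simp add: sgn_0_0)
next
  case False
  obtain t where t: "t \<in> Osgn I s" "inner r t = v" using assms unfolding Comp_def by auto
  have "w / v > 0" using assms(2) False by (auto simp: sgn_real_def divide_pos_pos divide_neg_neg split: if_splits)
  then have "(w/v) *\<^sub>R t \<in> Osgn I s" using Osgn_scale t by blast
  moreover have "inner r ((w/v) *\<^sub>R t) = w" using t False by simp
  ultimately show ?thesis unfolding Comp_def by blast
qed

lemma t0_in:
  assumes sv: "\<forall>i\<in>I. s i \<in> {-1,0,1}"
  shows "(\<chi> i. if i \<in> I then s i else 0) \<in> Osgn I s"
  using sv unfolding Osgn_def by auto

lemma posw_exists:
  assumes sv: "\<forall>i\<in>I. s i \<in> {-1,0,1}" and p: "posw I r s"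
  shows "\<exists>t\<in>Osgn I s. inner r t > 0"
proof -
  obtain k where k: "r$k \<noteq> 0" "k \<notin> I \<or> r$k * s k > 0" using p unfolding posw_def by auto
  define \<sigma> where "\<sigma> = (if k \<in> I then s k else sgn (r$k))"
  have rs: "r$k * \<sigma> > 0" using k unfolding \<sigma>_def
    by (auto simp: sgn_real_def mult_pos_pos mult_neg_neg)
  define t0 where "t0 = (\<chi> i. if i \<in> I then s i else 0)"
  have t0: "t0 \<in> Osgn I s" using t0_in[OF sv] t0_def by simp
  define M where "M = (\<bar>inner r t0\<bar> + 1) / (r$k * \<sigma>)"
  have M: "M > 0" using rs unfolding M_def by simp
  define t where "t = t0 + (M * \<sigma>) *\<^sub>R axis k 1"
  have "t \<in> Osgn I s"
  proof -
    have "sgn (t$i) = s i" if "i \<in> I" for i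
    proof (cases "i = k")
      case True
      have "s k \<noteq> 0" using k that True by auto
      then have "s k = 1 \<or> s k = -1" using sv that True by auto
      then show ?thesis using True that M unfolding t_def t0_def \<sigma>_def
        by (auto simp: axis_def sgn_real_def) 
    next
      case False
      then show ?thesis using that t0 unfolding t_def Osgn_def by (auto simp: axis_def)
    qed
    then show ?thesis unfolding Osgn_def by auto
  qed
  moreover have "inner r t = inner r t0 + M * (r$k * \<sigma>)"
    unfolding t_def by (simp add: inner_add_right inner_axis algebra_simps)
  moreover have "M * (r$k * \<sigma>) = \<bar>inner r t0\<bar> + 1" unfolding M_def using rs by (metis less_irrefl nonzero_eq_divide_eq mult.commute)
  ultimately show ?thesis by (intro bexI[of _ t]) auto
qed

lemma posw_neg: "posw I (-r) s = (\<exists>i. r$i \<noteq> 0 \<and> (i \<notin> I \<or> r$i * s i < 0))"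
  unfolding posw_def by auto

lemma term_pos_posw:
  assumes "t \<in> Osgn I s" "r$i * t$i > 0" shows "posw I r s"
proof -
  have "r$i \<noteq> 0" using assms(2) by auto
  moreover have "r$i * s i > 0" if "i \<in> I"
  proof -
    have "s i = sgn (t$i)" using assms(1) that unfolding Osgn_def by auto
    then show ?thesis using assms(2) by (auto simp: sgn_real_def zero_less_mult_iff)
  qed
  ultimately show ?thesis unfolding posw_def by blast
qed

lemma term_neg_posw:
  assumes "t \<in> Osgn I s" "r$i * t$i < 0" shows "posw I (-r) s"
  using term_pos_posw[of t I s "-r" i] assms by simp

lemma zero_posw_negw:
  assumes t: "t \<in> Osgn I s" and v: "inner r t = 0" and p: "posw I r s"
  shows "posw I (-r) s"
proof -
  obtain k where k: "r$k \<noteq> 0" "k \<notin> I \<or> r$k * s k > 0" using p unfolding posw_def by auto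
  show ?thesis
  proof (cases "k \<in> I")
    case False then show ?thesis using k unfolding posw_def by (intro exI[of _ k]) auto
  next
    case True
    then have "s k = sgn (t$k)" using t unfolding Osgn_def by auto
    then have rk: "r$k * t$k > 0" using k True by (auto simp: sgn_real_def zero_less_mult_iff split: if_splits)
    have "\<exists>l. r$l * t$l < 0"
    proof (rule ccontr)
      assume "\<not> ?thesis"
      then have "\<forall>l. r$l * t$l \<ge> 0" by (auto simp: not_less)
      then have "r$k * t$k \<le> (\<Sum>l\<in>UNIV. r$l * t$l)"
        by (intro member_le_sum) auto
      then show False using v rk by (simp add: inner_vec_def)
    qed
    then show ?thesis using term_neg_posw[OF t] by blast
  qed
qed

lemma comp_char:
  assumes sv: "\<forall>i\<in>I. s i \<in> {-1,0,1}"
  shows "Comp I r s v \<longleftrightarrow> (v = 0 \<and> (posw I r s \<longleftrightarrow> posw I (-r) s)) \<or> (v > 0 \<and> posw I r s) \<or> (v < 0 \<and> posw I (-r) s)"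
proof
  assume "Comp I r s v"
  then obtain t where t: "t \<in> Osgn I s" "inner r t = v" unfolding Comp_def by auto
  have iv: "inner r t = (\<Sum>l\<in>UNIV. r$l * t$l)" by (simp add: inner_vec_def)
  have 1: "v > 0 \<Longrightarrow> posw I r s"
  proof -
    assume "v > 0"
    then have "\<not> (\<forall>l. r$l * t$l \<le> 0)"
      using t(2) iv sum_nonpos[of UNIV "\<lambda>l. r$l * t$l"] by auto
    then have "\<exists>l. r$l * t$l > 0" by (auto simp: not_le)
    then show ?thesis using term_pos_posw[OF t(1)] by blast
  qed
  have 2: "v < 0 \<Longrightarrow> posw I (-r) s"
  proof -
    assume "v < 0"
    then have "\<not> (\<forall>l. r$l * t$l \<ge> 0)"
      using t(2) iv sum_nonneg[of UNIV "\<lambda>l. r$l * t$l"] by auto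
    then have "\<exists>l. r$l * t$l < 0" by (auto simp: not_le)
    then show ?thesis using term_neg_posw[OF t(1)] by blast
  qed
  have 3: "v = 0 \<Longrightarrow> (posw I r s \<longleftrightarrow> posw I (-r) s)"
    using zero_posw_negw[OF t(1), of r] zero_posw_negw[OF t(1), of "-r"] t(2) by auto
  show "(v = 0 \<and> (posw I r s \<longleftrightarrow> posw I (-r) s)) \<or> (v > 0 \<and> posw I r s) \<or> (v < 0 \<and> posw I (-r) s)"
    using 1 2 3 by (cases "v = 0"; cases "v > 0") auto
next
  assume H: "(v = 0 \<and> (posw I r s \<longleftrightarrow> posw I (-r) s)) \<or> (v > 0 \<and> posw I r s) \<or> (v < 0 \<and> posw I (-r) s)"
  have P: "\<exists>tp\<in>Osgn I s. inner r tp > 0" if "posw I r s"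
    using posw_exists[OF sv that] .
  have N: "\<exists>tn\<in>Osgn I s. inner r tn < 0" if "posw I (-r) s"
    using posw_exists[OF sv that] by (metis inner_minus_left neg_0_less_iff_less)
  consider "v > 0" "posw I r s" | "v < 0" "posw I (-r) s" | "v = 0" "posw I r s" "posw I (-r) s"
    | "v = 0" "\<not> posw I r s" "\<not> posw I (-r) s" using H by auto
  then show "Comp I r s v"
  proof cases
    case 1
    then obtain tp where tp: "tp \<in> Osgn I s" "inner r tp > 0" using P by auto
    have "(v / inner r tp) *\<^sub>R tp \<in> Osgn I s" using tp 1 by (intro Osgn_scale) auto
    moreover have "inner r ((v / inner r tp) *\<^sub>R tp) = v" using tp by simp
    ultimately show ?thesis unfolding Comp_def by blast
  next
    case 2
    then obtain tn where tn: "tn \<in> Osgn I s" "inner r tn < 0" using N by auto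
    have "(v / inner r tn) *\<^sub>R tn \<in> Osgn I s" using tn 2 by (intro Osgn_scale) (auto simp: divide_neg_neg)
    moreover have "inner r ((v / inner r tn) *\<^sub>R tn) = v" using tn by simp
    ultimately show ?thesis unfolding Comp_def by blast
  next
    case 3
    obtain tp where tp: "tp \<in> Osgn I s" "inner r tp > 0" using P 3 by auto
    obtain tn where tn: "tn \<in> Osgn I s" "inner r tn < 0" using N 3 by auto
    define t where "t = (- inner r tn) *\<^sub>R tp + (inner r tp) *\<^sub>R tn"
    have "t \<in> Osgn I s" unfolding t_def using tp tn by (intro Osgn_add Osgn_scale) auto
    moreover have "inner r t = 0" unfolding t_def by (simp add: inner_add_right inner_diff_right)
    ultimately show ?thesis unfolding Comp_def using 3 by blast
  next
    case 4
    define t0 where "t0 = (\<chi> i. if i \<in> I then s i else 0)"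
    have t0: "t0 \<in> Osgn I s" using t0_in[OF sv] t0_def by simp
    have "r$i * t0$i = 0" for i
    proof (cases "r$i = 0")
      case False
      then have "i \<in> I" "\<not> r$i * s i > 0" "\<not> r$i * s i < 0"
        using 4 unfolding posw_def by auto
      then show ?thesis unfolding t0_def by auto
    qed simp
    then have "inner r t0 = 0" unfolding inner_vec_def by (intro sum.neutral) (simp del: mult_eq_0_iff)
    then show ?thesis unfolding Comp_def using 4 t0 by blast
  qed
qed

lemma real_conf1: "(a::real) * b \<ge> 0 \<Longrightarrow> (a + b \<noteq> 0) = (a \<noteq> 0 \<or> b \<noteq> 0)"
  by (auto simp: zero_le_mult_iff)

lemma real_conf_aux: "(a::real) * b \<ge> 0 \<Longrightarrow> a * c > 0 \<Longrightarrow> b * c \<ge> 0"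
proof -
  assume h: "a * b \<ge> 0" "a * c > 0"
  have "(a*b)*(a*c) \<ge> 0" using h by simp
  then have "(a*a)*(b*c) \<ge> 0" by (simp add: algebra_simps)
  moreover have "a*a > 0" using h(2) by (auto simp: zero_less_mult_iff)
  ultimately show ?thesis by (simp add: zero_le_mult_iff)
qed

lemma real_conf2: "(a::real) * b \<ge> 0 \<Longrightarrow> ((a + b) * c > 0) = (a * c > 0 \<or> b * c > 0)"
proof -
  assume h: "a * b \<ge> 0"
  have "(a + b) * c = a * c + b * c" by (simp add: distrib_right)
  moreover have "a * c > 0 \<Longrightarrow> b * c \<ge> 0" using real_conf_aux[OF h] .
  moreover have "b * c > 0 \<Longrightarrow> a * c \<ge> 0" using real_conf_aux[of b a c] h by (simp add: mult.commute)
  ultimately show ?thesis by linarith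
qed

lemma posw_add:
  assumes "\<forall>i. r1$i * r2$i \<ge> 0"
  shows "posw I (r1 + r2) s = (posw I r1 s \<or> posw I r2 s)"
proof -
  have "\<And>i. ((r1+r2)$i \<noteq> 0 \<and> (i \<notin> I \<or> (r1+r2)$i * s i > 0)) =
    ((r1$i \<noteq> 0 \<and> (i \<notin> I \<or> r1$i * s i > 0)) \<or> (r2$i \<noteq> 0 \<and> (i \<notin> I \<or> r2$i * s i > 0)))"
    using real_conf1 real_conf2 assms by auto
  then show ?thesis unfolding posw_def by blast
qed

lemma Comp_add:
  assumes sv: "\<forall>i\<in>I. s i \<in> {-1,0,1}" and conf: "\<forall>i. r1$i * r2$i \<ge> 0"
    and c1: "Comp I r1 s v1" and c2: "Comp I r2 s v2"
  shows "Comp I (r1 + r2) s (v1 + v2)"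
proof -
  have conf': "\<forall>i. (-r1)$i * (-r2)$i \<ge> 0" using conf by simp
  have p: "posw I (r1 + r2) s = (posw I r1 s \<or> posw I r2 s)" using posw_add[OF conf] .
  have n: "posw I (-(r1 + r2)) s = (posw I (-r1) s \<or> posw I (-r2) s)"
    using posw_add[OF conf'] by (simp add: add.commute)
  show ?thesis using c1 c2 unfolding comp_char[OF sv] p n
    by (smt (verit))
qed

definition dep :: "('m::finite \<Rightarrow> real^'n) \<Rightarrow> real^'m \<Rightarrow> bool" where
  "dep u r = ((\<Sum>i\<in>UNIV. r$i *\<^sub>R u i) = 0)"

definition supp :: "real^'m \<Rightarrow> 'm set" where
  "supp r = {i. r$i \<noteq> 0}"

lemma dep_scale: "dep u r \<Longrightarrow> dep u (c *\<^sub>R r)"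
  proof -
  assume "dep u r"
  then have "c *\<^sub>R (\<Sum>i\<in>UNIV. r$i *\<^sub>R u i) = 0" unfolding dep_def by simp
  then show ?thesis unfolding dep_def by (simp add: scaleR_sum_right)
qed

lemma dep_diff: "dep u r1 \<Longrightarrow> dep u r2 \<Longrightarrow> dep u (r1 - r2)"
  unfolding dep_def by (simp add: scaleR_left_diff_distrib sum_subtractf)

lemma dep_minus: "dep u r \<Longrightarrow> dep u (- r)"
  using dep_scale[of u r "-1"] by simp

lemma supp_zero: "(r = 0) = (supp r = {})"
  unfolding supp_def by (auto simp: vec_eq_iff)

lemma dep_family_iff:
  fixes u :: "'m::finite \<Rightarrow> real^'n"
  shows "dep_family u D \<longleftrightarrow> (\<exists>r. dep u r \<and> r \<noteq> 0 \<and> supp r \<subseteq> D)"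
proof
  assume "dep_family u D"
  then obtain c where c: "(\<Sum>i\<in>D. c i *\<^sub>R u i) = 0" "\<exists>i\<in>D. c i \<noteq> 0"
    unfolding dep_family_def by auto
  define r :: "real^'m" where "r = (\<chi> i. if i \<in> D then c i else 0)"
  have "(\<Sum>i\<in>UNIV. r$i *\<^sub>R u i) = (\<Sum>i\<in>UNIV. if i \<in> D then c i *\<^sub>R u i else 0)"
    unfolding r_def by (intro sum.cong) auto
  also have "\<dots> = (\<Sum>i\<in>D. c i *\<^sub>R u i)" by (simp add: sum.If_cases)
  finally have "dep u r" using c(1) unfolding dep_def by simp
  moreover have "r \<noteq> 0" using c(2) unfolding r_def by (auto simp: vec_eq_iff)
  moreover have "supp r \<subseteq> D" unfolding r_def supp_def by auto
  ultimately show "\<exists>r. dep u r \<and> r \<noteq> 0 \<and> supp r \<subseteq> D" by blast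
next
  assume "\<exists>r. dep u r \<and> r \<noteq> 0 \<and> supp r \<subseteq> D"
  then obtain r where r: "dep u r" "r \<noteq> 0" "supp r \<subseteq> D" by auto
  have "(\<Sum>i\<in>D. r$i *\<^sub>R u i) = (\<Sum>i\<in>UNIV. r$i *\<^sub>R u i)"
    using r(3) unfolding supp_def by (intro sum.mono_neutral_left) auto
  then have "(\<Sum>i\<in>D. r$i *\<^sub>R u i) = 0" using r(1) unfolding dep_def by simp
  moreover have "\<exists>i\<in>D. r$i \<noteq> 0" using r(2,3) unfolding supp_def by (auto simp: vec_eq_iff)
  ultimately show "dep_family u D" unfolding dep_family_def by blast
qed

lemma circuit_iff:
  fixes u :: "'m::finite \<Rightarrow> real^'n"
  shows "circuit u C \<longleftrightarrow> (\<exists>r. dep u r \<and> r \<noteq> 0 \<and> supp r \<subseteq> C) \<and> (\<forall>r. dep u r \<and> r \<noteq> 0 \<longrightarrow> \<not> supp r \<subset> C)"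
  unfolding circuit_def dep_family_iff by blast

lemma circuit_vec_prop:
  fixes u :: "'m::finite \<Rightarrow> real^'n"
  assumes "circuit u C"
  shows "dep u (circuit_vec u C) \<and> supp (circuit_vec u C) = C"
proof -
  obtain r where r: "dep u r" "r \<noteq> 0" "supp r \<subseteq> C" and m: "\<forall>r. dep u r \<and> r \<noteq> 0 \<longrightarrow> \<not> supp r \<subset> C"
    using assms unfolding circuit_iff by blast
  have "supp r = C" using r m by blast
  then have "\<exists>c. (\<Sum>i\<in>UNIV. c $ i *\<^sub>R u i) = 0 \<and> (\<forall>i. c $ i \<noteq> 0 \<longleftrightarrow> i \<in> C)"
    using r(1) unfolding dep_def supp_def by (intro exI[of _ r]) auto
  from someI_ex[OF this] show ?thesis unfolding circuit_vec_def dep_def supp_def by auto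
qed

lemma circuit_parallel:
  fixes u :: "'m::finite \<Rightarrow> real^'n"
  assumes C: "circuit u C" and y: "dep u y" "supp y \<subseteq> C"
  shows "\<exists>\<mu>. y = \<mu> *\<^sub>R circuit_vec u C"
proof -
  define c where "c = circuit_vec u C"
  have c: "dep u c" "supp c = C" using circuit_vec_prop[OF C] c_def by auto
  have m: "\<forall>r. dep u r \<and> r \<noteq> 0 \<longrightarrow> \<not> supp r \<subset> C" using C unfolding circuit_iff by blast
  have "C \<noteq> {}" using C unfolding circuit_iff supp_zero by blast
  then obtain k where k: "k \<in> C" by auto
  then have ck: "c$k \<noteq> 0" using c(2) unfolding supp_def by auto
  define z where "z = y - (y$k / c$k) *\<^sub>R c"
  have "dep u z" unfolding z_def by (intro dep_diff dep_scale y c)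
  moreover have "supp z \<subseteq> C - {k}" using y(2) c(2) ck unfolding z_def supp_def by auto
  then have "supp z \<subset> C" using k by blast
  ultimately have "z = 0" using m by blast
  then show ?thesis unfolding z_def by (intro exI[of _ "y$k / c$k"]) (simp add: c_def)
qed

lemma sign_trans_pos: "(a::real) * b > 0 \<Longrightarrow> b * c > 0 \<Longrightarrow> a * c > 0"
  by (auto simp: zero_less_mult_iff)

lemma conformal_circuit:
  fixes u :: "'m::finite \<Rightarrow> real^'n"
  assumes r: "dep u r" "r \<noteq> 0"
  shows "\<exists>y. dep u y \<and> y \<noteq> 0 \<and> circuit u (supp y) \<and> (\<forall>i. y$i \<noteq> 0 \<longrightarrow> y$i * r$i > 0)"
proof -
  define P where "P y = (dep u y \<and> y \<noteq> 0 \<and> (\<forall>i. y$i \<noteq> 0 \<longrightarrow> y$i * r$i > 0))" for y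
  have "P r" unfolding P_def using r by (auto simp: zero_less_mult_iff not_less linorder_neq_iff)
  from ex_has_least_nat[of P r "\<lambda>y. card (supp y)", OF this]
  obtain y where Py: "P y" and mini: "\<And>y'. P y' \<Longrightarrow> card (supp y) \<le> card (supp y')" by blast
  have "\<not> supp z \<subset> supp y" if z: "dep u z" "z \<noteq> 0" for z
  proof
    assume zs: "supp z \<subset> supp y"
    obtain i0 where i0: "z$i0 \<noteq> 0" using z(2) by (auto simp: vec_eq_iff)
    then have yi0: "y$i0 \<noteq> 0" using zs unfolding supp_def by auto
    define z' where "z' = (if z$i0 * y$i0 > 0 then z else -z)"
    have z'dep: "dep u z'" unfolding z'_def using z(1) dep_minus by auto
    have z'supp: "supp z' = supp z" unfolding z'_def supp_def by auto
    have z'i0: "z'$i0 * y$i0 > 0"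
    proof -
      have "z$i0 * y$i0 \<noteq> 0" using i0 yi0 by simp
      note p = this
      show ?thesis
      proof (cases "z$i0 * y$i0 > 0")
        case True then show ?thesis by (simp add: z'_def)
      next
        case False then have "z$i0 * y$i0 < 0" using p by linarith
        then show ?thesis using False by (simp add: z'_def)
      qed
    qed
    define J where "J = {i. z'$i * y$i > 0}"
    have J: "finite J" "i0 \<in> J" unfolding J_def using z'i0 by auto
    define lam where "lam = Min ((\<lambda>i. y$i / z'$i) ` J)"
    have "lam \<in> (\<lambda>i. y$i / z'$i) ` J" unfolding lam_def using J by (intro Min_in) auto
    then obtain k where k: "k \<in> J" "lam = y$k / z'$k" by auto
    have lam_le: "lam \<le> y$i / z'$i" if "i \<in> J" for i
      unfolding lam_def using J that by (intro Min_le) auto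
    have kJ: "z'$k * y$k > 0" using k(1) unfolding J_def by auto
    have lam_pos: "lam > 0" using k(2) kJ by (auto simp: zero_less_divide_iff zero_less_mult_iff)
    define y' where "y' = y - lam *\<^sub>R z'"
    have A: "y$i = 0 \<Longrightarrow> y'$i = 0" for i
    proof -
      assume "y$i = 0"
      then have "z'$i = 0" using zs z'supp unfolding supp_def by auto
      then show ?thesis using \<open>y$i = 0\<close> unfolding y'_def by simp
    qed
    have B: "y'$i * y$i \<ge> 0" for i
    proof (cases "i \<in> J")
      case True
      then have zy: "z'$i * y$i > 0" unfolding J_def by auto
      then have zi: "z'$i \<noteq> 0" by auto
      have "lam * (z'$i * y$i) \<le> (y$i / z'$i) * (z'$i * y$i)"
        using lam_le[OF True] zy by (intro mult_right_mono) auto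
      also have "\<dots> = y$i * y$i" using zi by simp
      finally show ?thesis unfolding y'_def by (simp add: algebra_simps)
    next
      case False
      then have "z'$i * y$i \<le> 0" unfolding J_def by auto
      then have "lam * (z'$i * y$i) \<le> 0" using lam_pos by (simp add: mult_nonneg_nonpos)
      moreover have "y$i * y$i \<ge> 0" by simp
      moreover have "y'$i * y$i = y$i * y$i - lam * (z'$i * y$i)" unfolding y'_def by (simp add: algebra_simps)
      ultimately show ?thesis by linarith
    qed
    have C: "y'$k = 0" using kJ k(2) unfolding y'_def by auto
    have "P y'"
    proof -
      have "dep u y'" unfolding y'_def using Py z'dep unfolding P_def by (intro dep_diff dep_scale) auto
      moreover have "y' \<noteq> 0"
      proof
        assume "y' = 0"
        then have "y = lam *\<^sub>R z'" unfolding y'_def by simp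
        then have "supp y = supp z'" using lam_pos unfolding supp_def by auto
        then show False using zs z'supp by auto
      qed
      moreover have "y'$i * r$i > 0" if "y'$i \<noteq> 0" for i
      proof -
        have "y$i \<noteq> 0" using A that by auto
        then have "y'$i * y$i > 0" using B[of i] that by (simp add: order_le_less)
        moreover have "y$i * r$i > 0" using Py \<open>y$i \<noteq> 0\<close> unfolding P_def by auto
        ultimately show ?thesis by (rule sign_trans_pos)
      qed
      ultimately show ?thesis unfolding P_def by auto
    qed
    moreover have "card (supp y') < card (supp y)"
    proof -
      have "supp y' \<subseteq> supp y - {k}" using A C unfolding supp_def by auto
      moreover have "k \<in> supp y" using kJ unfolding supp_def by auto
      ultimately have "supp y' \<subset> supp y" by blast
      then show ?thesis by (intro psubset_card_mono) auto
    qed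
    ultimately show False using mini by fastforce
  qed
  then have "circuit u (supp y)" using Py unfolding circuit_iff P_def by blast
  then show ?thesis using Py unfolding P_def by blast
qed

lemma all_deps_comp:
  fixes u :: "'m::finite \<Rightarrow> real^'n" and b :: "real^'m"
  assumes sv: "\<forall>i\<in>(UNIV::'m set). s i \<in> {-1,0,1}"
    and H: "\<forall>C. circuit u C \<longrightarrow> Comp UNIV (circuit_vec u C) s (- inner (circuit_vec u C) b)"
  shows "dep u r \<Longrightarrow> Comp UNIV r s (- inner r b)"
proof (induction "card (supp r)" arbitrary: r rule: less_induct)
  case less
  show ?case
  proof (cases "r = 0")
    case True
    have "(\<chi> i. if i \<in> (UNIV::'m set) then s i else 0) \<in> Osgn UNIV s" using t0_in[OF sv] .
    then show ?thesis using True unfolding Comp_def by auto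
  next
    case False
    obtain y where y: "dep u y" "y \<noteq> 0" "circuit u (supp y)" "\<forall>i. y$i \<noteq> 0 \<longrightarrow> y$i * r$i > 0"
      using conformal_circuit[OF less.prems False] by blast
    obtain \<mu> where mu: "y = \<mu> *\<^sub>R circuit_vec u (supp y)"
      using circuit_parallel[OF y(3) y(1)] by blast
    have "Comp UNIV (\<mu> *\<^sub>R circuit_vec u (supp y)) s (\<mu> * (- inner (circuit_vec u (supp y)) b))"
      using H y(3) by (intro Comp_scale) auto
    then have Cy: "Comp UNIV y s (- inner y b)" using mu by (metis inner_scaleR_left mult_minus_right)
    have fin: "finite (supp y)" "supp y \<noteq> {}" using y(2) supp_zero by auto
    define lam where "lam = Min ((\<lambda>i. r$i / y$i) ` supp y)"
    have "lam \<in> (\<lambda>i. r$i / y$i) ` supp y" unfolding lam_def using fin by (intro Min_in) auto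
    then obtain k where k: "k \<in> supp y" "lam = r$k / y$k" by auto
    have lam_le: "lam \<le> r$i / y$i" if "i \<in> supp y" for i
      unfolding lam_def using fin that by (intro Min_le) auto
    have yk: "y$k * r$k > 0" using y(4) k(1) unfolding supp_def by auto
    have lam_pos: "lam > 0" using k(2) yk by (auto simp: zero_less_divide_iff zero_less_mult_iff)
    define r' where "r' = r - lam *\<^sub>R y"
    have dr': "dep u r'" unfolding r'_def using less.prems y(1) by (intro dep_diff dep_scale)
    have A: "r$i = 0 \<Longrightarrow> r'$i = 0" for i
    proof -
      assume "r$i = 0"
      then have "y$i = 0" using y(4) by fastforce
      then show ?thesis using \<open>r$i = 0\<close> unfolding r'_def by simp
    qed
    have C: "r'$k = 0" using yk k(2) unfolding r'_def by auto
    have "supp r' \<subset> supp r"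
    proof -
      have "supp r' \<subseteq> supp r - {k}" using A C unfolding supp_def by auto
      moreover have "k \<in> supp r" using yk unfolding supp_def by auto
      ultimately show ?thesis by blast
    qed
    then have "card (supp r') < card (supp r)" by (intro psubset_card_mono) auto
    then have Cr': "Comp UNIV r' s (- inner r' b)" using less.hyps dr' by blast
    have conf: "\<forall>i. r'$i * (lam *\<^sub>R y)$i \<ge> 0"
    proof
      fix i
      show "r'$i * (lam *\<^sub>R y)$i \<ge> 0"
      proof (cases "y$i = 0")
        case True then show ?thesis by simp
      next
        case False
        then have iy: "i \<in> supp y" unfolding supp_def by auto
        have yr: "y$i * r$i > 0" using y(4) False by auto
        have "lam * (y$i * y$i) \<le> (r$i / y$i) * (y$i * y$i)"
          using lam_le[OF iy] by (intro mult_right_mono) auto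
        also have "\<dots> = y$i * r$i" using False by simp
        finally have "r'$i * y$i \<ge> 0" unfolding r'_def by (simp add: algebra_simps)
        then have "lam * (r'$i * y$i) \<ge> 0" using lam_pos by simp
        then show ?thesis by (simp add: algebra_simps)
      qed
    qed
    have "Comp UNIV (r' + lam *\<^sub>R y) s (- inner r' b + lam * (- inner y b))"
      using Comp_add[OF sv conf Cr' Comp_scale[OF Cy]] .
    moreover have "r' + lam *\<^sub>R y = r" unfolding r'_def by simp
    moreover have "- inner r' b + lam * (- inner y b) = - inner r b"
      unfolding r'_def by (simp add: inner_diff_left algebra_simps)
    ultimately show ?thesis by simp
  qed
qed

lemma Osgn_convex:
  assumes "t1 \<in> Osgn I s" "t2 \<in> Osgn I s" "c1 \<ge> 0" "c2 \<ge> 0" "c1 + c2 = 1"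
  shows "c1 *\<^sub>R t1 + c2 *\<^sub>R t2 \<in> Osgn I s"
proof -
  consider "c1 = 0" | "c2 = 0" | "c1 > 0" "c2 > 0" using assms by linarith
  then show ?thesis
  proof cases
    case 1 then show ?thesis using assms by simp
  next
    case 2 then show ?thesis using assms by simp
  next
    case 3 then show ?thesis using assms by (intro Osgn_add Osgn_scale) auto
  qed
qed

lemma farkas:
  fixes u :: "'m::finite \<Rightarrow> real^'n" and a :: "real^'m"
  assumes sv: "\<forall>i\<in>I. s i \<in> {-1,0,1}"
    and H: "\<forall>r. dep u r \<longrightarrow> Comp I r s (- inner r a)"
  shows "\<exists>x. \<forall>i\<in>I. sgn (inner (u i) x - a$i) = s i"
proof (rule ccontr)
  assume nx: "\<not> ?thesis"
  define Uv :: "real^'n \<Rightarrow> real^'m" where "Uv x = (\<chi> i. inner (u i) x)" for x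
  define D where "D = {Uv x - a - t | x t. t \<in> Osgn I s}"
  have Uv_lin: "Uv (c1 *\<^sub>R x1 + c2 *\<^sub>R x2) = c1 *\<^sub>R Uv x1 + c2 *\<^sub>R Uv x2" for c1 c2 x1 x2
    unfolding Uv_def by (simp add: vec_eq_iff inner_add_right)
  have "0 \<notin> D"
  proof
    assume "0 \<in> D"
    then obtain x t where xt: "0 = Uv x - a - t" "t \<in> Osgn I s" unfolding D_def by auto
    then have "t = Uv x - a" by (simp add: algebra_simps)
    then have "\<forall>i\<in>I. sgn (inner (u i) x - a$i) = s i" using xt(2) unfolding Osgn_def Uv_def by auto
    then show False using nx by blast
  qed
  moreover have "convex D"
    unfolding convex_def
  proof (intro ballI allI impI)
    fix y1 y2 and c1 c2 :: real
    assume y: "y1 \<in> D" "y2 \<in> D" and c: "0 \<le> c1" "0 \<le> c2" "c1 + c2 = 1"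
    obtain x1 t1 where 1: "y1 = Uv x1 - a - t1" "t1 \<in> Osgn I s" using y(1) unfolding D_def by auto
    obtain x2 t2 where 2: "y2 = Uv x2 - a - t2" "t2 \<in> Osgn I s" using y(2) unfolding D_def by auto
    have "c1 *\<^sub>R y1 + c2 *\<^sub>R y2 = Uv (c1 *\<^sub>R x1 + c2 *\<^sub>R x2) - (c1 + c2) *\<^sub>R a - (c1 *\<^sub>R t1 + c2 *\<^sub>R t2)"
      unfolding 1 2 Uv_lin by (simp add: algebra_simps)
    also have "\<dots> = Uv (c1 *\<^sub>R x1 + c2 *\<^sub>R x2) - a - (c1 *\<^sub>R t1 + c2 *\<^sub>R t2)" using c by simp
    finally show "c1 *\<^sub>R y1 + c2 *\<^sub>R y2 \<in> D"
      unfolding D_def using Osgn_convex[OF 1(2) 2(2) c] by blast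
  qed
  moreover define t0 where "t0 = (\<chi> i. if i \<in> I then s i else 0)"
  have t0: "t0 \<in> Osgn I s" using t0_in[OF sv] t0_def by simp
  have "D \<noteq> {}" unfolding D_def using t0 by blast
  ultimately obtain r where r: "r \<in> span D" "r \<noteq> 0" "\<And>y. y \<in> D \<Longrightarrow> 0 \<le> inner r y"
    using separating_hyperplane_set_0_inspan by metis
  define w where "w = (\<Sum>i\<in>UNIV. r$i *\<^sub>R u i)"
  have Uvr: "inner r (Uv x) = inner w x" for x
  proof -
    have "inner r (Uv x) = (\<Sum>i\<in>UNIV. r$i * inner (u i) x)"
      unfolding Uv_def inner_vec_def[of r] by simp
    also have "\<dots> = inner w x" unfolding w_def by (simp add: inner_sum_left)
    finally show ?thesis .
  qed
  have key: "0 \<le> inner w x - inner r a - inner r t" if "t \<in> Osgn I s" for x t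
  proof -
    have "Uv x - a - t \<in> D" unfolding D_def using that by blast
    then have "0 \<le> inner r (Uv x - a - t)" using r(3) by blast
    then show ?thesis using Uvr[of x] by (simp add: inner_diff_right)
  qed
  have "w = 0"
  proof (rule ccontr)
    assume wn: "w \<noteq> 0"
    define K where "K = \<bar>inner r a\<bar> + \<bar>inner r t0\<bar> + 1"
    have "inner w (- (K / inner w w) *\<^sub>R w) = - K" using wn by simp
    then have "0 \<le> - K - inner r a - inner r t0" using key[OF t0, of "- (K / inner w w) *\<^sub>R w"] by simp
    then show False unfolding K_def by linarith
  qed
  then have dr: "dep u r" unfolding dep_def w_def by simp
  have ii: "inner r t \<le> - inner r a" if "t \<in> Osgn I s" for t
    using key[OF that, of 0] \<open>w = 0\<close> by simp
  have "\<exists>t1\<in>Osgn I s. inner r t1 < - inner r a"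
  proof (rule ccontr)
    assume "\<not> ?thesis"
    then have eq: "inner r t = - inner r a" if "t \<in> Osgn I s" for t using ii[OF that] that by force
    have "orthogonal r y" if yD: "y \<in> D" for y
    proof -
      obtain x t where "y = Uv x - a - t" "t \<in> Osgn I s" using yD unfolding D_def by auto
      then show ?thesis using eq Uvr \<open>w = 0\<close> unfolding orthogonal_def by (simp add: inner_diff_right)
    qed
    then have "orthogonal r r" using orthogonal_to_span[OF r(1)] by blast
    then show False using r(2) unfolding orthogonal_def by simp
  qed
  then obtain t1 where t1: "t1 \<in> Osgn I s" "inner r t1 < - inner r a" by blast
  obtain t0' where t0': "t0' \<in> Osgn I s" "inner r t0' = - inner r a" using H dr unfolding Comp_def by blast
  have "inner r (2 *\<^sub>R t0') \<le> - inner r a" by (rule ii) (intro Osgn_scale t0', simp)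
  moreover have "inner r ((1/2) *\<^sub>R t0') \<le> - inner r a" by (rule ii) (intro Osgn_scale t0', simp)
  ultimately have z: "inner r a = 0" using t0'(2) by simp
  have "Comp I r s 0" using t0' z unfolding Comp_def by auto
  moreover have "Comp I r s (inner r t1)" using t1 unfolding Comp_def by auto
  ultimately have "posw I r s" using t1(2) z unfolding comp_char[OF sv] by auto
  then have "Comp I r s 1" unfolding comp_char[OF sv] by auto
  then obtain t where "t \<in> Osgn I s" "inner r t = 1" unfolding Comp_def by auto
  then show False using ii z by fastforce
qed


lemma sgn_in: "sgn (x::real) \<in> {-1,0,1}"
  by (auto simp: sgn_real_def)

lemma inner_Uv_dep:
  fixes u :: "'m::finite \<Rightarrow> real^'n"
  shows "inner r (\<chi> i. inner (u i) x) = inner (\<Sum>i\<in>UNIV. r$i *\<^sub>R u i) x"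
proof -
  have "inner r (\<chi> i. inner (u i) x) = (\<Sum>i\<in>UNIV. r$i * inner (u i) x)"
    unfolding inner_vec_def[of r] by simp
  also have "\<dots> = inner (\<Sum>i\<in>UNIV. r$i *\<^sub>R u i) x" by (simp add: inner_sum_left)
  finally show ?thesis .
qed

lemma nec:
  fixes u :: "'m::finite \<Rightarrow> real^'n"
  assumes "dep u r"
  shows "Comp UNIV r (sign_vec u a x) (- inner r a)"
proof -
  define t where "t = (\<chi> i. inner (u i) x) - a"
  have "t \<in> Osgn UNIV (sign_vec u a x)" unfolding t_def Osgn_def sign_vec_def by simp
  moreover have "inner r t = - inner r a"
    unfolding t_def inner_diff_right inner_Uv_dep using assms unfolding dep_def by simp
  ultimately show ?thesis unfolding Comp_def by blast
qed

lemma sign_sub: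
  fixes u :: "'m::finite \<Rightarrow> real^'n"
  assumes eqv: "\<forall>C. circuit u C \<longrightarrow> sgn (inner (circuit_vec u C) a) = sgn (inner (circuit_vec u C) b)"
    and s: "s \<in> sign_arr u a"
  shows "s \<in> sign_arr u b"
proof -
  obtain x where x: "s = sign_vec u a x" using s unfolding sign_arr_def by auto
  have sv: "\<forall>i\<in>(UNIV::'m set). s i \<in> {-1,0,1}" unfolding x sign_vec_def using sgn_in by blast
  have "\<forall>C. circuit u C \<longrightarrow> Comp UNIV (circuit_vec u C) s (- inner (circuit_vec u C) b)"
  proof (intro allI impI)
    fix C assume C: "circuit u C"
    have "Comp UNIV (circuit_vec u C) s (- inner (circuit_vec u C) a)"
      unfolding x using nec circuit_vec_prop[OF C] by blast
    then show "Comp UNIV (circuit_vec u C) s (- inner (circuit_vec u C) b)"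
    proof (rule Comp_sgn)
      have "sgn (inner (circuit_vec u C) a) = sgn (inner (circuit_vec u C) b)" using eqv C by blast
      then show "sgn (- inner (circuit_vec u C) a) = sgn (- inner (circuit_vec u C) b)" by (simp only: sgn_minus)
    qed
  qed
  then have "\<forall>r. dep u r \<longrightarrow> Comp UNIV r s (- inner r b)" using all_deps_comp[OF sv] by blast
  from farkas[OF sv this] obtain x' where "\<forall>i\<in>UNIV. sgn (inner (u i) x' - b$i) = s i" by blast
  then have "sign_vec u b x' = s" unfolding sign_vec_def by auto
  then show ?thesis unfolding sign_arr_def by auto
qed

lemma L1: "sgn (x::real) = sgn v \<Longrightarrow> v > 0 \<Longrightarrow> x > 0"
  by (metis sgn_greater)
lemma L2: "sgn (x::real) = sgn v \<Longrightarrow> v < 0 \<Longrightarrow> - x > 0"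
  by (metis sgn_less neg_0_less_iff_less)
lemma L3: "sgn (x::real) = sgn v \<Longrightarrow> v = 0 \<Longrightarrow> x = 0"
  by (metis sgn_eq_0_iff)
lemma sum_sgn:
  fixes f :: "'a \<Rightarrow> real"
  assumes "finite A" "A \<noteq> {}" "\<forall>i\<in>A. sgn (f i) = sgn v"
  shows "sgn (sum f A) = sgn v"
proof -
  consider "v > 0" | "v < 0" | "v = 0" by linarith
  then show ?thesis
  proof cases
    case 1
    then have "\<forall>i\<in>A. f i > 0" using assms(3) L1 by blast
    then have "sum f A > 0" using assms(1,2) by (intro sum_pos) auto
    then show ?thesis using 1 by simp
  next
    case 2
    then have "\<forall>i\<in>A. - f i > 0" using assms(3) L2 by blast
    then have "sum (\<lambda>i. - f i) A > 0" using assms(1,2) by (intro sum_pos) auto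
    then have "sum f A < 0" by (simp add: sum_negf)
    then show ?thesis using 2 by simp
  next
    case 3
    then have "\<forall>i\<in>A. f i = 0" using assms(3) L3 by blast
    then show ?thesis using 3 by simp
  qed
qed

lemma sgn_self: "(x::real) \<noteq> 0 \<Longrightarrow> sgn x * sgn x = 1"
  by (simp add: sgn_real_def)

lemma sign_K:
  fixes u :: "'m::finite \<Rightarrow> real^'n"
  assumes sub: "sign_arr u a \<subseteq> sign_arr u b" and C: "circuit u C"
  shows "sgn (inner (circuit_vec u C) a) = sgn (inner (circuit_vec u C) b)"
proof -
  define c where "c = circuit_vec u C"
  have c: "dep u c" "supp c = C" using circuit_vec_prop[OF C] c_def by auto
  have Cne: "C \<noteq> {}" using C unfolding circuit_iff supp_zero by blast
  then have cne: "c \<noteq> 0" using c(2) supp_zero by auto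
  have cc: "inner c c > 0" using cne by simp
  define \<kappa> where "\<kappa> = inner c a / inner c c"
  define ts where "ts = (- \<kappa>) *\<^sub>R c"
  define s where "s = (\<lambda>i. sgn (ts$i))"
  have sv: "\<forall>i\<in>C. s i \<in> {-1,0,1}" unfolding s_def using sgn_in by blast
  have tsO: "ts \<in> Osgn C s" unfolding Osgn_def s_def by simp
  have H: "\<forall>r. dep u r \<longrightarrow> Comp C r s (- inner r a)"
  proof (intro allI impI)
    fix r assume r: "dep u r"
    show "Comp C r s (- inner r a)"
    proof (cases "supp r \<subseteq> C")
      case True
      then obtain \<mu> where mu: "r = \<mu> *\<^sub>R c" using circuit_parallel[OF C r] c_def by auto
      have "inner r ts = - inner r a" unfolding mu ts_def \<kappa>_def using cc by simp
      then show ?thesis unfolding Comp_def using tsO by blast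
    next
      case False
      then obtain k where k: "r$k \<noteq> 0" "k \<notin> C" unfolding supp_def by auto
      define t where "t = ts + ((- inner r a - inner r ts) / r$k) *\<^sub>R axis k 1"
      have "t \<in> Osgn C s" using tsO k(2) unfolding t_def Osgn_def by (auto simp: axis_def)
      moreover have "inner r t = - inner r a" unfolding t_def using k(1) by (simp add: inner_add_right inner_axis)
      ultimately show ?thesis unfolding Comp_def by blast
    qed
  qed
  obtain x where x: "\<forall>i\<in>C. sgn (inner (u i) x - a$i) = s i" using farkas[OF sv H] by blast
  have "sign_vec u a x \<in> sign_arr u b" using sub unfolding sign_arr_def by auto
  then obtain x' where x': "sign_vec u b x' = sign_vec u a x" unfolding sign_arr_def by auto
  define tt where "tt i = inner (u i) x' - b$i" for i
  have tts: "sgn (tt i) = s i" if "i \<in> C" for i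
    using fun_cong[OF x', of i] x that unfolding tt_def sign_vec_def by simp
  have "(\<Sum>i\<in>UNIV. c$i * tt i) = inner c ((\<chi> i. inner (u i) x') - b)"
    unfolding tt_def inner_vec_def[of c] by simp
  also have "\<dots> = - inner c b"
    unfolding inner_diff_right inner_Uv_dep using c(1) unfolding dep_def by simp
  finally have s1: "(\<Sum>i\<in>UNIV. c$i * tt i) = - inner c b" .
  have "(\<Sum>i\<in>UNIV. c$i * tt i) = (\<Sum>i\<in>C. c$i * tt i)"
    using c(2) unfolding supp_def by (intro sum.mono_neutral_right) auto
  moreover have "sgn (c$i * tt i) = sgn (- inner c a)" if iC: "i \<in> C" for i
  proof -
    have ci: "c$i \<noteq> 0" using c(2) iC unfolding supp_def by auto
    have "sgn (c$i * tt i) = sgn (c$i) * sgn (- \<kappa> * c$i)"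
      using tts[OF iC] unfolding s_def ts_def by (simp add: sgn_mult)
    also have "\<dots> = (sgn (c$i) * sgn (c$i)) * sgn (- \<kappa>)" by (simp add: sgn_mult)
    also have "\<dots> = sgn (- \<kappa>)" using sgn_self[OF ci] by simp
    also have "\<dots> = sgn (- inner c a)" unfolding \<kappa>_def using cc
      by (simp add: sgn_divide)
    finally show ?thesis .
  qed
  ultimately have "sgn (- inner c b) = sgn (- inner c a)"
    using s1 sum_sgn[of C "\<lambda>i. c$i * tt i" "- inner c a"] Cne by simp
  then show ?thesis unfolding c_def by (simp add: sgn_minus)
qed

lemma sign_iff:
  fixes u :: "'m::finite \<Rightarrow> real^'n"
  shows "sign_arr u a \<subseteq> sign_arr u b \<longleftrightarrow>
    (\<forall>C. circuit u C \<longrightarrow> sgn (inner (circuit_vec u C) a) = sgn (inner (circuit_vec u C) b))"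
  using sign_K sign_sub by blast

lemma FaceSign:
  fixes u :: "'m::finite \<Rightarrow> real^'n"
  shows "Face_op u (Sign_op u S) = {b. \<forall>a\<in>S. \<forall>C. circuit u C \<longrightarrow>
     sgn (inner (circuit_vec u C) a) = sgn (inner (circuit_vec u C) b)}"
proof -
  have "Face_op u (Sign_op u S) = {b. \<forall>a\<in>S. sign_arr u a \<subseteq> sign_arr u b}"
    unfolding Face_op_def Sign_op_def Face_vec_def by blast
  then show ?thesis using sign_iff by blast
qed

theorem mainTheorem20:
  fixes u :: "'m::finite \<Rightarrow> real^'n" and S :: "(real^'m) set"
  assumes "\<forall>i. u i \<noteq> 0"
    and "S \<noteq> {}"
  shows "Face_op u (Sign_op u S) = S \<longleftrightarrow> derived_open_face u S"
proof -
  define E where "E a b = (\<forall>C. circuit u C \<longrightarrow>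
     sgn (inner (circuit_vec u C) a) = sgn (inner (circuit_vec u C) b))" for a b
  have F: "Face_op u (Sign_op u S) = {b. \<forall>a\<in>S. E a b}" unfolding E_def FaceSign ..
  show ?thesis
  proof
    assume h: "Face_op u (Sign_op u S) = S"
    obtain a0 where a0: "a0 \<in> S" using assms(2) by auto
    define \<epsilon> where "\<epsilon> C = sgn (inner (circuit_vec u C) a0)" for C
    have "S = {y. \<forall>C. circuit u C \<longrightarrow> sgn (inner (circuit_vec u C) y) = \<epsilon> C}"
    proof
      show "S \<subseteq> {y. \<forall>C. circuit u C \<longrightarrow> sgn (inner (circuit_vec u C) y) = \<epsilon> C}"
        using h a0 unfolding F E_def \<epsilon>_def by auto
    next
      show "{y. \<forall>C. circuit u C \<longrightarrow> sgn (inner (circuit_vec u C) y) = \<epsilon> C} \<subseteq> S"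
      proof
        fix y assume y: "y \<in> {y. \<forall>C. circuit u C \<longrightarrow> sgn (inner (circuit_vec u C) y) = \<epsilon> C}"
        have "E a y" if "a \<in> S" for a
        proof -
          have "a \<in> {b. \<forall>a\<in>S. E a b}" using that h F by simp
          then have "E a0 a" using a0 by auto
          then show ?thesis using y unfolding E_def \<epsilon>_def by auto
        qed
        then show "y \<in> S" using h F by auto
      qed
    qed
    moreover have "\<forall>C. \<epsilon> C \<in> {-1, 0, 1}" unfolding \<epsilon>_def using sgn_in by blast
    ultimately show "derived_open_face u S" unfolding derived_open_face_def using assms(2) by blast
  next
    assume "derived_open_face u S"
    then obtain \<epsilon> where S: "S = {y. \<forall>C. circuit u C \<longrightarrow> sgn (inner (circuit_vec u C) y) = \<epsilon> C}"
      unfolding derived_open_face_def by blast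
    show "Face_op u (Sign_op u S) = S"
      unfolding F
    proof
      show "{b. \<forall>a\<in>S. E a b} \<subseteq> S"
      proof
        fix b assume b: "b \<in> {b. \<forall>a\<in>S. E a b}"
        obtain a where a: "a \<in> S" using assms(2) by auto
        then have "E a b" using b by auto
        then show "b \<in> S" using a unfolding S E_def by auto
      qed
    next
      show "S \<subseteq> {b. \<forall>a\<in>S. E a b}" unfolding S E_def by auto
    qed
  qed
qed

end
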